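(* Let $f\in\mathrm{Homeo}_+(\mathbb{R})$ satisfy $f(x+1)=f(x)+2$ for all $x\in\mathbb{R}$ and $f(0)=0$. For $r=p/2^q$ with $p,q\in\mathbb{Z}$ define $\bar r=f^{-q}(T_p(f^q(0)))$, where $T_p(x)=x+p$. Then the map $r\mapsto\bar r$ from $\mathbb{Q}_2$ to $\mathbb{R}$ is well defined (independent of the representation $r=p/2^q$), strictly increasing, fixes every integer, and satisfies $\overline{r+1}=\bar r+1$ for all $r\in\mathbb{Q}_2$.
   Context: $\mathbb{Q}_2=\{p/2^q:p,q\in\mathbb{Z}\}$ denotes the dyadic rationals; $\mathrm{Homeo}_+(\mathbb{R})$ is the group of increasing self-homeomorphisms of $\mathbb{R}$. *)

theory Defs
  imports Complex_Main
begin

definition int_iter :: "(real \<Rightarrow> real) \<Rightarrow> int \<Rightarrow> real \<Rightarrow> real" where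
  "int_iter f q = (if q \<ge> 0 then f ^^ nat q else (inv f) ^^ nat (- q))"

definition dyad_bar :: "(real \<Rightarrow> real) \<Rightarrow> int \<Rightarrow> int \<Rightarrow> real" where
  "dyad_bar f p q = int_iter f (- q) (int_iter f q 0 + real_of_int p)"

end

theory Submission
  imports Defs
begin

context
  fixes f :: "real \<Rightarrow> real"
  assumes incr: "strict_mono f"
    and onto: "surj f"
    and lift: "\<And>x. f (x + 1) = f x + 2"
    and zero: "f 0 = 0"
begin

lemma injf: "inj f"
  by (rule strict_mono_imp_inj_on[OF incr])

lemma gf: "inv f (f x) = x"
  by (rule inv_f_f[OF injf])

lemma fg: "f (inv f y) = y"
  using onto surj_f_inv_f by metis

lemma g0: "inv f 0 = 0"
  by (metis gf zero)

lemma gmono: "x < y \<Longrightarrow> inv f x < inv f y"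
  by (metis fg incr strict_mono_less)

lemma fshift: "f (x + real_of_int m) = f x + 2 * real_of_int m"
proof (induction m rule: int_induct[where k=0])
  case base then show ?case by simp
next
  case (step1 i)
  have "f (x + real_of_int (i+1)) = f ((x + real_of_int i) + 1)" by (simp add: algebra_simps)
  also have "\<dots> = f x + 2 * real_of_int i + 2" using lift step1 by simp
  finally show ?case by simp
next
  case (step2 i)
  have "f (x + real_of_int i) = f ((x + real_of_int (i - 1)) + 1)" by (simp add: algebra_simps)
  also have "\<dots> = f (x + real_of_int (i - 1)) + 2" by (rule lift)
  finally show ?case using step2 by simp
qed

lemma gshift: "inv f (y + 2 * real_of_int m) = inv f y + real_of_int m"
proof -
  have "f (inv f y + real_of_int m) = y + 2 * real_of_int m" using fshift fg by simp
  then show ?thesis by (metis gf)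
qed

lemma step: "int_iter f (n+1) x = f (int_iter f n x)"
proof (cases "n \<ge> 0")
  case True
  then have "nat (n+1) = Suc (nat n)" by simp
  then show ?thesis using True by (simp add: int_iter_def)
next
  case False
  show ?thesis
  proof (cases "n = -1")
    case True then show ?thesis by (simp add: int_iter_def fg)
  next
    case False2: False
    then have "nat (-n) = Suc (nat (- (n+1)))" using False by simp
    then show ?thesis using False False2 by (simp add: int_iter_def fg)
  qed
qed

lemma stepdown: "int_iter f (n-1) x = inv f (int_iter f n x)"
  using step[of "n-1" x] gf by simp

lemma comp: "int_iter f (a+b) x = int_iter f a (int_iter f b x)"
proof (induction a rule: int_induct[where k=0])
  case base then show ?case by (simp add: int_iter_def)
next
  case (step1 i)
  then show ?case using step[of "i+b"] step[of i] by (simp add: algebra_simps)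
next
  case (step2 i)
  then show ?case using stepdown[of "i+b"] stepdown[of i] by (simp add: algebra_simps)
qed

lemma iter0: "int_iter f n 0 = 0"
proof (induction n rule: int_induct[where k=0])
  case base then show ?case by (simp add: int_iter_def)
next
  case (step1 i) then show ?case using step zero by simp
next
  case (step2 i) then show ?case using stepdown g0 by simp
qed

lemma neg_nat: "int_iter f (- int k) = inv f ^^ k"
  unfolding int_iter_def by (cases "k = 0") auto

lemma gk_shift: "(inv f ^^ k) (x + 2^k * real_of_int m) = (inv f ^^ k) x + real_of_int m"
proof (induction k arbitrary: x)
  case 0 then show ?case by simp
next
  case (Suc k)
  have "(inv f ^^ Suc k) (x + 2^Suc k * real_of_int m) = (inv f ^^ k) (inv f (x + 2 * real_of_int (2^k * m)))"
    by (simp add: funpow_Suc_right algebra_simps del: funpow.simps)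
  also have "\<dots> = (inv f ^^ k) (inv f x + 2^k * real_of_int m)" using gshift[of x "2^k*m"] by simp
  also have "\<dots> = (inv f ^^ Suc k) x + real_of_int m" using Suc by (simp add: funpow_Suc_right del: funpow.simps)
  finally show ?case .
qed

lemma gk_mono: "x < y \<Longrightarrow> (inv f ^^ k) x < (inv f ^^ k) y"
  by (induction k) (simp_all add: gmono)

lemma gk0: "(inv f ^^ k) 0 = 0"
  by (induction k) (simp_all add: g0)

lemma bar_eq: "dyad_bar f p q = int_iter f (-q) (real_of_int p)"
  by (simp add: dyad_bar_def iter0)

lemma bar_lift: "dyad_bar f (2^k * p) (q + int k) = dyad_bar f p q"
proof -
  have "dyad_bar f (2^k * p) (q + int k) = int_iter f (-q + - int k) (real_of_int (2^k * p))"
    by (simp add: bar_eq algebra_simps)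
  also have "\<dots> = int_iter f (-q) ((inv f ^^ k) (0 + 2^k * real_of_int p))"
    by (simp only: comp neg_nat) simp
  also have "\<dots> = dyad_bar f p q" by (simp only: gk_shift) (simp add: bar_eq gk0)
  finally show ?thesis .
qed


lemma normalize:
  assumes "q \<le> int N"
  shows "dyad_bar f p q = (inv f ^^ N) (real_of_int (2 ^ nat (int N - q) * p))"
    and "real_of_int p / 2 powi q = real_of_int (2 ^ nat (int N - q) * p) / 2 ^ N"
proof -
  define k where "k = nat (int N - q)"
  have qk: "q + int k = int N" using assms k_def by simp
  have "dyad_bar f p q = dyad_bar f (2^k * p) (int N)" using bar_lift[of k p q] qk by simp
  also have "\<dots> = (inv f ^^ N) (real_of_int (2^k * p))" by (simp add: bar_eq neg_nat)
  finally show "dyad_bar f p q = (inv f ^^ N) (real_of_int (2 ^ nat (int N - q) * p))"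
    by (simp add: k_def)
  have "(2::real) ^ N = 2 powi (q + int k)" using qk by (simp add: power_int_of_nat)
  also have "\<dots> = 2 powi q * 2 ^ k" by (simp add: power_int_add power_int_of_nat)
  finally have "(2::real) ^ N = 2 powi q * 2 ^ k" .
  then show "real_of_int p / 2 powi q = real_of_int (2 ^ nat (int N - q) * p) / 2 ^ N"
    by (simp add: k_def field_simps)
qed

lemma common:
  "\<exists>N P P'. dyad_bar f p q = (inv f ^^ N) (real_of_int P)
     \<and> dyad_bar f p' q' = (inv f ^^ N) (real_of_int P')
     \<and> real_of_int p / 2 powi q = real_of_int P / 2 ^ N
     \<and> real_of_int p' / 2 powi q' = real_of_int P' / 2 ^ N"
proof -
  define N where "N = nat (max (max q q') 0)"
  have "q \<le> int N" "q' \<le> int N" by (auto simp: N_def)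
  then show ?thesis using normalize by blast
qed

end

theorem mainTheorem3:
  fixes f :: "real \<Rightarrow> real"
  assumes incr: "strict_mono f"
    and cont: "continuous_on UNIV f"
    and onto: "surj f"
    and lift: "\<And>x. f (x + 1) = f x + 2"
    and zero: "f 0 = 0"
  shows "(\<forall>p q p' q'. real_of_int p / 2 powi q = real_of_int p' / 2 powi q'
             \<longrightarrow> dyad_bar f p q = dyad_bar f p' q')
       \<and> (\<forall>p q p' q'. real_of_int p / 2 powi q < real_of_int p' / 2 powi q'
             \<longrightarrow> dyad_bar f p q < dyad_bar f p' q')
       \<and> (\<forall>p q (n::int). real_of_int p / 2 powi q = real_of_int n
             \<longrightarrow> dyad_bar f p q = real_of_int n)
       \<and> (\<forall>p q p' q'. real_of_int p' / 2 powi q' = real_of_int p / 2 powi q + 1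
             \<longrightarrow> dyad_bar f p' q' = dyad_bar f p q + 1)"
proof (intro conjI allI impI)
  note C = common[OF incr onto lift zero]
  have pos: "(0::real) < 2 ^ N" for N :: nat by simp
  show E: "dyad_bar f p q = dyad_bar f p' q'" if "real_of_int p / 2 powi q = real_of_int p' / 2 powi q'" for p q p' q'
  proof -
    obtain N P P' where h: "dyad_bar f p q = (inv f ^^ N) (real_of_int P)"
      "dyad_bar f p' q' = (inv f ^^ N) (real_of_int P')"
      "real_of_int p / 2 powi q = real_of_int P / 2 ^ N"
      "real_of_int p' / 2 powi q' = real_of_int P' / 2 ^ N" using C[of p q p' q'] by blast
    have "real_of_int P = real_of_int P'" using that h(3,4) pos[of N] by (simp add: field_simps)
    then show ?thesis using h(1,2) by simp
  qed
  show "dyad_bar f p q < dyad_bar f p' q'" if "real_of_int p / 2 powi q < real_of_int p' / 2 powi q'" for p q p' q'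
  proof -
    obtain N P P' where h: "dyad_bar f p q = (inv f ^^ N) (real_of_int P)"
      "dyad_bar f p' q' = (inv f ^^ N) (real_of_int P')"
      "real_of_int p / 2 powi q = real_of_int P / 2 ^ N"
      "real_of_int p' / 2 powi q' = real_of_int P' / 2 ^ N" using C[of p q p' q'] by blast
    have "real_of_int P < real_of_int P'" using that h(3,4) pos[of N] by (simp add: divide_strict_right_mono_neg field_simps)
    then show ?thesis using h(1,2) gk_mono[OF incr onto lift zero] by simp
  qed
  show "dyad_bar f p q = real_of_int n" if "real_of_int p / 2 powi q = real_of_int n" for p q n
  proof -
    have "dyad_bar f p q = dyad_bar f n 0" using E[of p q n 0] that by simp
    then show ?thesis by (simp add: dyad_bar_def int_iter_def)
  qed
  show "dyad_bar f p' q' = dyad_bar f p q + 1" if "real_of_int p' / 2 powi q' = real_of_int p / 2 powi q + 1" for p q p' q'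
  proof -
    obtain N P P' where h: "dyad_bar f p q = (inv f ^^ N) (real_of_int P)"
      "dyad_bar f p' q' = (inv f ^^ N) (real_of_int P')"
      "real_of_int p / 2 powi q = real_of_int P / 2 ^ N"
      "real_of_int p' / 2 powi q' = real_of_int P' / 2 ^ N" using C[of p q p' q'] by blast
    have "real_of_int P' = real_of_int P + 2 ^ N * real_of_int 1" using that h(3,4) pos[of N] by (simp add: field_simps)
    then show ?thesis using h(1,2) gk_shift[OF incr onto lift zero, of N "real_of_int P" 1] by simp
  qed
qed

end
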